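(* For every positive integer $k$ there is a deterministic algorithm that uses only the ordinal profile and makes no distance queries. On every finite metric space $(X,d)$ and every consistent profile, it returns a set of centers $C\subseteq X$ with $|C|\le 2^{k-1}$ such that $\max_{x\in X} d(x,C)\le 2\cdot\mathrm{OPT}^{\mathrm{center}}_k(X,d)$.
   Context: Ordinal query model: $(X,d)$ is a finite metric space with $|X|=n$. Every point $x\in X$ reports a ranking $\pi_x$ of all points of $X$ such that $y$ is ranked above $y'$ only if $d(x,y)\le d(x,y')$ (ties broken arbitrarily); the collection $P=\{\pi_x\}_{x\in X}$ is a profile consistent with $d$. An algorithm receives $X$, $k$ and $P$ for free. Its only other access to $d$ is by querying the exact value $d(x,y)$ for pairs of its choice; each such value costs one query. For $C\subseteq X$ write $d(x,C)=\min_{c\in C}d(x,c)$. The $k$-center cost of $C$ is $\max_{x\in X}d(x,C)$, and $\mathrm{OPT}^{\mathrm{center}}_k(X,d)=\min_{C\subseteq X,|C|=k}\max_{x\in X}d(x,C)$. *)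

theory Defs
  imports Complex_Main
begin

definition metric_on :: "'a set \<Rightarrow> ('a \<Rightarrow> 'a \<Rightarrow> real) \<Rightarrow> bool" where
  "metric_on X d \<longleftrightarrow>
     (\<forall>x\<in>X. \<forall>y\<in>X. d x y = 0 \<longleftrightarrow> x = y) \<and>
     (\<forall>x\<in>X. \<forall>y\<in>X. d x y = d y x) \<and>
     (\<forall>x\<in>X. \<forall>y\<in>X. \<forall>z\<in>X. d x z \<le> d x y + d y z)"

definition consistent_profile :: "'a set \<Rightarrow> ('a \<Rightarrow> 'a \<Rightarrow> real) \<Rightarrow> ('a \<Rightarrow> 'a list) \<Rightarrow> bool" where
  "consistent_profile X d P \<longleftrightarrow>
     (\<forall>x\<in>X. distinct (P x) \<and> set (P x) = X \<and>
        (\<forall>i j. i < j \<and> j < length (P x) \<longrightarrow> d x (P x ! i) \<le> d x (P x ! j)))"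

definition dist_to_set :: "('a \<Rightarrow> 'a \<Rightarrow> real) \<Rightarrow> 'a \<Rightarrow> 'a set \<Rightarrow> real" where
  "dist_to_set d x C = Min ((\<lambda>c. d x c) ` C)"

definition center_cost :: "'a set \<Rightarrow> ('a \<Rightarrow> 'a \<Rightarrow> real) \<Rightarrow> 'a set \<Rightarrow> real" where
  "center_cost X d C = Max ((\<lambda>x. dist_to_set d x C) ` X)"

definition opt_center :: "'a set \<Rightarrow> ('a \<Rightarrow> 'a \<Rightarrow> real) \<Rightarrow> nat \<Rightarrow> real" where
  "opt_center X d k = Min {center_cost X d C | C. C \<subseteq> X \<and> card C = k}"

end

theory Submission
  imports Defs
begin

definition before :: "'a list \<Rightarrow> 'a \<Rightarrow> 'a \<Rightarrow> bool" where
  "before L a b \<longleftrightarrow> (\<exists>i j. i \<le> j \<and> j < length L \<and> L!i = a \<and> L!j = b)"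

fun alg :: "('a \<Rightarrow> 'a list) \<Rightarrow> nat \<Rightarrow> 'a set \<Rightarrow> 'a \<Rightarrow> 'a set" where
  "alg P 0 S x = {x}"
| "alg P (Suc j) S x =
     (if filter (\<lambda>z. z \<in> S) (P x) = [] then {x} else
      (let y = last (filter (\<lambda>z. z \<in> S) (P x));
           Sx = {z \<in> S. before (P z) x y}
       in alg P j Sx x \<union> alg P j (S - Sx) y))"

lemma alg_struct: "finite S \<Longrightarrow> alg P j S x \<subseteq> insert x S \<and> x \<in> alg P j S x \<and> card (alg P j S x) \<le> 2^j"
proof (induction j arbitrary: S x)
  case 0
  then show ?case by auto
next
  case (Suc j)
  show ?case
  proof (cases "filter (\<lambda>z. z \<in> S) (P x) = []")
    case True
    then show ?thesis by auto
  next
    case False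
    define y where "y = last (filter (\<lambda>z. z \<in> S) (P x))"
    define Sx where "Sx = {z \<in> S. before (P z) x y}"
    have yS: "y \<in> S" using False unfolding y_def
      by (metis (mono_tags, lifting) last_in_set mem_Collect_eq set_filter)
    have e: "alg P (Suc j) S x = alg P j Sx x \<union> alg P j (S - Sx) y"
      using False by (simp add: y_def Sx_def Let_def)
    have f1: "finite Sx" "finite (S - Sx)" using Suc.prems by (auto simp: Sx_def)
    note I1 = Suc.IH[OF f1(1), of x] and I2 = Suc.IH[OF f1(2), of y]
    have fin: "finite (alg P j Sx x)" "finite (alg P j (S - Sx) y)"
      using I1 I2 f1 by (meson finite_insert finite_subset)+
    have "card (alg P (Suc j) S x) \<le> card (alg P j Sx x) + card (alg P j (S - Sx) y)"
      unfolding e by (rule card_Un_le)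
    also have "\<dots> \<le> 2^Suc j" using I1 I2 by simp
    finally show ?thesis using I1 I2 yS unfolding e Sx_def by auto
  qed
qed

context
  fixes X :: "'a set" and d :: "'a \<Rightarrow> 'a \<Rightarrow> real" and P and r :: real
  assumes met: "metric_on X d" and cons: "consistent_profile X d P" and finX: "finite X"
begin

lemma sym: "x \<in> X \<Longrightarrow> y \<in> X \<Longrightarrow> d x y = d y x"
  using met unfolding metric_on_def by blast

lemma tri: "x \<in> X \<Longrightarrow> y \<in> X \<Longrightarrow> z \<in> X \<Longrightarrow> d x z \<le> d x y + d y z"
  using met unfolding metric_on_def by blast

lemma before_le: "z \<in> X \<Longrightarrow> before (P z) x y \<Longrightarrow> d z x \<le> d z y"
proof -
  assume z: "z \<in> X" and b: "before (P z) x y"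
  then obtain i j where ij: "i \<le> j" "j < length (P z)" "P z ! i = x" "P z ! j = y"
    unfolding before_def by blast
  show ?thesis
  proof (cases "i = j")
    case True then show ?thesis using ij by simp
  next
    case False then show ?thesis using ij cons z unfolding consistent_profile_def by force
  qed
qed

lemma not_before_le: "z \<in> X \<Longrightarrow> x \<in> X \<Longrightarrow> y \<in> X \<Longrightarrow> \<not> before (P z) x y \<Longrightarrow> d z y \<le> d z x"
proof -
  assume z: "z \<in> X" and x: "x \<in> X" and y: "y \<in> X" and nb: "\<not> before (P z) x y"
  have s: "set (P z) = X" using cons z unfolding consistent_profile_def by blast
  obtain i where i: "i < length (P z)" "P z ! i = x" using x s by (metis in_set_conv_nth)
  obtain j where j: "j < length (P z)" "P z ! j = y" using y s by (metis in_set_conv_nth)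
  have "j < i" using nb i j unfolding before_def by force
  then show ?thesis using i j cons z unfolding consistent_profile_def by force
qed

lemma farthest:
  assumes x: "x \<in> X" and S: "S \<subseteq> X" and ne: "filter (\<lambda>z. z \<in> S) (P x) \<noteq> []"
    and z: "z \<in> S"
  shows "d x z \<le> d x (last (filter (\<lambda>z. z \<in> S) (P x)))"
proof -
  let ?L = "filter (\<lambda>z. z \<in> S) (P x)"
  have "sorted_wrt (\<lambda>a b. d x a \<le> d x b) (P x)"
    using cons x unfolding consistent_profile_def sorted_wrt_iff_nth_less by blast
  hence so: "sorted_wrt (\<lambda>a b. d x a \<le> d x b) ?L" by (simp add: sorted_wrt_filter)
  have zL: "z \<in> set ?L" using z S cons x unfolding consistent_profile_def by auto
  have dec: "?L = butlast ?L @ [last ?L]" using ne by simp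
  show ?thesis
  proof (cases "z = last ?L")
    case True then show ?thesis by simp
  next
    case False
    hence "z \<in> set (butlast ?L)" using zL dec by (metis in_set_conv_decomp_last rotate1.simps(2) set_ConsD set_rotate1)
    then show ?thesis using so dec by (metis sorted_wrt_append list.set_intros(1))
  qed
qed

lemma cover:
  "S \<subseteq> X \<Longrightarrow> x \<in> X \<Longrightarrow> finite Cs \<Longrightarrow> Cs \<subseteq> X \<Longrightarrow> card Cs \<le> j \<Longrightarrow>
   (\<forall>z\<in>S. d x z \<le> 2*r \<or> (\<exists>c\<in>Cs. d z c \<le> r)) \<Longrightarrow>
   (\<forall>z\<in>S. \<exists>a\<in>alg P j S x. d z a \<le> 2*r)"
proof (induction j arbitrary: S x Cs)
  case 0
  then show ?case using sym by (auto simp: subset_iff)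
next
  case (Suc j)
  show ?case
  proof (cases "filter (\<lambda>z. z \<in> S) (P x) = []")
    case True
    have "S = {}"
    proof (rule ccontr)
      assume "S \<noteq> {}" then obtain z where "z \<in> S" by blast
      moreover have "set (P x) = X" using cons Suc.prems(2) unfolding consistent_profile_def by blast
      ultimately show False using True Suc.prems(1) by (metis (mono_tags, lifting) filter_empty_conv subsetD)
    qed
    then show ?thesis by simp
  next
    case False
    define y where "y = last (filter (\<lambda>z. z \<in> S) (P x))"
    define Sx where "Sx = {z \<in> S. before (P z) x y}"
    have yS: "y \<in> S" using False unfolding y_def
      by (metis (mono_tags, lifting) last_in_set mem_Collect_eq set_filter)
    have yX: "y \<in> X" using yS Suc.prems by auto
    have e: "alg P (Suc j) S x = alg P j Sx x \<union> alg P j (S - Sx) y"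
      using False by (simp add: y_def Sx_def Let_def)
    have far: "\<And>z. z \<in> S \<Longrightarrow> d x z \<le> d x y"
      using farthest[OF Suc.prems(2,1) False] unfolding y_def by blast
    have finS: "finite S" using Suc.prems(1) finX finite_subset by blast
    show ?thesis
    proof (cases "d x y \<le> 2*r")
      case True
      have "x \<in> alg P (Suc j) S x" using alg_struct[OF finS] by blast
      show ?thesis
      proof
        fix z assume z: "z \<in> S"
        have "d z x = d x z" using sym Suc.prems(1,2) z by blast
        also have "\<dots> \<le> 2*r" using far[OF z] True by simp
        finally show "\<exists>a\<in>alg P (Suc j) S x. d z a \<le> 2*r" using \<open>x \<in> alg P (Suc j) S x\<close> by blast
      qed
    next
      case False
      then obtain cb where cb: "cb \<in> Cs" "d y cb \<le> r" using Suc.prems(6) yS by force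
      define Cs' where "Cs' = Cs - {cb}"
      have cbX: "cb \<in> X" using cb Suc.prems(4) by auto
      have c1: "finite Cs'" "Cs' \<subseteq> X" "card Cs' \<le> j"
        using Suc.prems(3,4,5) cb by (auto simp: Cs'_def)
      have h1: "\<forall>z\<in>Sx. d x z \<le> 2*r \<or> (\<exists>c\<in>Cs'. d z c \<le> r)"
      proof
        fix z assume z: "z \<in> Sx"
        hence zX: "z \<in> X" and bz: "before (P z) x y" using Suc.prems(1) by (auto simp: Sx_def)
        from z Suc.prems(6) have "d x z \<le> 2*r \<or> (\<exists>c\<in>Cs. d z c \<le> r)" by (auto simp: Sx_def)
        moreover
        { assume "d z cb \<le> r"
          have "d z x \<le> d z y" using before_le[OF zX bz] .
          also have "\<dots> \<le> d z cb + d cb y" using tri[OF zX cbX yX] .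
          also have "\<dots> \<le> 2*r" using \<open>d z cb \<le> r\<close> cb(2) sym[OF yX cbX] by simp
          finally have "d x z \<le> 2*r" using sym[OF zX Suc.prems(2)] by simp }
        ultimately show "d x z \<le> 2*r \<or> (\<exists>c\<in>Cs'. d z c \<le> r)" unfolding Cs'_def by blast
      qed
      have h2: "\<forall>z\<in>S - Sx. d y z \<le> 2*r \<or> (\<exists>c\<in>Cs'. d z c \<le> r)"
      proof
        fix z assume z: "z \<in> S - Sx"
        hence zX: "z \<in> X" and bz: "\<not> before (P z) x y" using Suc.prems(1) by (auto simp: Sx_def)
        have le: "d z y \<le> d z x" using not_before_le[OF zX Suc.prems(2) yX bz] .
        from z Suc.prems(6) have "d x z \<le> 2*r \<or> (\<exists>c\<in>Cs. d z c \<le> r)" by auto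
        moreover
        { assume "d x z \<le> 2*r"
          hence "d y z \<le> 2*r" using le sym[OF zX yX] sym[OF zX Suc.prems(2)] by simp }
        moreover
        { assume "d z cb \<le> r"
          have "d y z \<le> d y cb + d cb z" using tri[OF yX cbX zX] .
          hence "d y z \<le> 2*r" using \<open>d z cb \<le> r\<close> cb(2) sym[OF zX cbX] by simp }
        ultimately show "d y z \<le> 2*r \<or> (\<exists>c\<in>Cs'. d z c \<le> r)" unfolding Cs'_def by blast
      qed
      have A: "\<forall>z\<in>Sx. \<exists>a\<in>alg P j Sx x. d z a \<le> 2*r"
        using Suc.IH[of Sx x Cs'] Suc.prems(1,2) c1 h1 by (auto simp: Sx_def)
      have B: "\<forall>z\<in>S - Sx. \<exists>a\<in>alg P j (S - Sx) y. d z a \<le> 2*r"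
        using Suc.IH[of "S - Sx" y Cs'] Suc.prems(1) yX c1 h2 by auto
      show ?thesis unfolding e using A B by blast
    qed
  qed
qed

end

theorem mainTheorem2:
  fixes k :: nat
  assumes "k \<ge> 1"
  shows "\<exists>A :: 'a set \<Rightarrow> nat \<Rightarrow> ('a \<Rightarrow> 'a list) \<Rightarrow> 'a set.
           \<forall>(X :: 'a set) (d :: 'a \<Rightarrow> 'a \<Rightarrow> real) P.
             finite X \<and> k \<le> card X \<and> metric_on X d \<and> consistent_profile X d P \<longrightarrow>
               A X k P \<subseteq> X \<and> A X k P \<noteq> {} \<and> card (A X k P) \<le> 2 ^ (k - 1) \<and>
               center_cost X d (A X k P) \<le> 2 * opt_center X d k"
proof (intro exI allI impI)
  fix X :: "'a set" and d :: "'a \<Rightarrow> 'a \<Rightarrow> real" and P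
  assume H: "finite X \<and> k \<le> card X \<and> metric_on X d \<and> consistent_profile X d P"
  hence finX: "finite X" and kX: "k \<le> card X" and met: "metric_on X d" and cons: "consistent_profile X d P" by auto
  have Xne: "X \<noteq> {}" using kX assms by auto
  define x where "x = (SOME x. x \<in> X)"
  have xX: "x \<in> X" using Xne unfolding x_def by (simp add: some_in_eq)
  define A where "A = alg P (k - 1) X x"
  have st: "A \<subseteq> X" "x \<in> A" "card A \<le> 2^(k-1)"
    using alg_struct[OF finX, of P "k-1" x] xX unfolding A_def by auto
  have finA: "finite A" using st finX finite_subset by blast
  define r where "r = opt_center X d k"
  let ?F = "{center_cost X d C | C. C \<subseteq> X \<and> card C = k}"
  have finF: "finite ?F" using finX by simp
  obtain C0 where C0: "C0 \<subseteq> X" "card C0 = k" using kX by (meson obtain_subset_with_card_n)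
  have "?F \<noteq> {}" using C0 by blast
  hence "r \<in> ?F" unfolding r_def opt_center_def using finF Min_in by blast
  then obtain C where C: "C \<subseteq> X" "card C = k" "center_cost X d C = r" by blast
  have finC: "finite C" using C finX finite_subset by blast
  have Cne: "C \<noteq> {}" using C assms by auto
  have near: "\<exists>c\<in>C. d z c \<le> r" if z: "z \<in> X" for z
  proof -
    have "dist_to_set d z C \<in> (\<lambda>c. d z c) ` C"
      unfolding dist_to_set_def using finC Cne Min_in by blast
    then obtain c where c: "c \<in> C" "d z c = dist_to_set d z C" by auto
    have "dist_to_set d z C \<le> center_cost X d C"
      unfolding center_cost_def using finX z by auto
    then show ?thesis using c C by (metis order_refl)
  qed
  obtain cx where cx: "cx \<in> C" "d x cx \<le> r" using near xX by blast
  have cxX: "cx \<in> X" using cx C by auto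
  define Cs where "Cs = C - {cx}"
  have hyp: "\<forall>z\<in>X. d x z \<le> 2*r \<or> (\<exists>c\<in>Cs. d z c \<le> r)"
  proof
    fix z assume z: "z \<in> X"
    obtain c where c: "c \<in> C" "d z c \<le> r" using near z by blast
    show "d x z \<le> 2*r \<or> (\<exists>c\<in>Cs. d z c \<le> r)"
    proof (cases "c = cx")
      case True
      have "d x z \<le> d x cx + d cx z" using tri[OF met cons finX xX cxX z] .
      then have "d x z \<le> 2*r" using True c cx sym[OF met cons finX z cxX] by simp
      then show ?thesis by simp
    next
      case False then show ?thesis using c unfolding Cs_def by blast
    qed
  qed
  have cov: "\<forall>z\<in>X. \<exists>a\<in>A. d z a \<le> 2*r"
    unfolding A_def
    by (rule cover[OF met cons finX, of X x Cs "k-1"])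
       (use xX finC C cx hyp in \<open>auto simp: Cs_def\<close>)
  have "center_cost X d A \<le> 2*r"
    unfolding center_cost_def
  proof (subst Max_le_iff)
    show "finite ((\<lambda>x. dist_to_set d x A) ` X)" using finX by simp
    show "(\<lambda>x. dist_to_set d x A) ` X \<noteq> {}" using Xne by simp
    show "\<forall>a\<in>(\<lambda>x. dist_to_set d x A) ` X. a \<le> 2 * r"
    proof
      fix a assume "a \<in> (\<lambda>x. dist_to_set d x A) ` X"
      then obtain z where z: "z \<in> X" "a = dist_to_set d z A" by auto
      obtain b where b: "b \<in> A" "d z b \<le> 2*r" using cov z by blast
      have "dist_to_set d z A \<le> d z b" unfolding dist_to_set_def using finA b by simp
      then show "a \<le> 2*r" using z b by simp
    qed
  qed
  then show "alg P (k - 1) X (SOME x. x \<in> X) \<subseteq> X \<and> alg P (k - 1) X (SOME x. x \<in> X) \<noteq> {} \<and>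
        card (alg P (k - 1) X (SOME x. x \<in> X)) \<le> 2 ^ (k - 1) \<and>
        center_cost X d (alg P (k - 1) X (SOME x. x \<in> X)) \<le> 2 * opt_center X d k"
    using st unfolding A_def x_def r_def by auto
qed

end
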